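(* Let $A$ be a commutative ring and $\varphi:L\to L'$ an isogeny of free abelian groups of finite rank whose degree $\deg\varphi=\#(L'/\varphi(L))$ is invertible in $A$. Then the induced homomorphism $\varphi_R:R(L)\to R(L')$ is an isomorphism.
   Context: An isogeny is an injective homomorphism with finite cokernel. For a free abelian group $L$ of finite rank, $R(L)=\varprojlim_kA[L]/J^k$ is the completion of the group ring $A[L]$ (basis $\delta_\ell$) at its augmentation ideal $J$. The map $\varphi_R$ is the continuous $A$-algebra homomorphism induced by $\delta_\ell\mapsto\delta_{\varphi(\ell)}$. *)

theory Defs
  imports "HOL-Analysis.Finite_Cartesian_Product" "HOL-Library.Poly_Mapping"
begin

text \<open>Free abelian groups of finite rank are modelled as \<open>int ^ 'n\<close> with \<open>'n\<close> finite.
  The group ring A[L] is the type \<open>L \<Rightarrow>\<^sub>0 A\<close> of finitely supported functions with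
  convolution product; \<open>Poly_Mapping.single l 1\<close> is the basis element delta_l.\<close>

definition grp_hom :: "('l::plus \<Rightarrow> 'm::plus) \<Rightarrow> bool" where
  "grp_hom f \<longleftrightarrow> (\<forall>x y. f (x + y) = f x + f y)"

definition cokernel :: "('l \<Rightarrow> 'm::plus) \<Rightarrow> 'm set set" where
  "cokernel f = {(\<lambda>v. y + v) ` range f | y. True}"

definition isogeny :: "('l::plus \<Rightarrow> 'm::plus) \<Rightarrow> bool" where
  "isogeny f \<longleftrightarrow> grp_hom f \<and> inj f \<and> finite (cokernel f)"

definition iso_degree :: "('l \<Rightarrow> 'm::plus) \<Rightarrow> nat" where
  "iso_degree f = card (cokernel f)"

definition augmentation :: "('l \<Rightarrow>\<^sub>0 'a::comm_ring_1) \<Rightarrow> 'a" where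
  "augmentation x = (\<Sum>l\<in>Poly_Mapping.keys x. Poly_Mapping.lookup x l)"

definition aug_ideal :: "('l::comm_monoid_add \<Rightarrow>\<^sub>0 'a::comm_ring_1) set" where
  "aug_ideal = {x. augmentation x = 0}"

inductive_set sum_closure :: "'r::comm_monoid_add set \<Rightarrow> 'r set" for S where
  zero: "0 \<in> sum_closure S"
| base: "x \<in> S \<Longrightarrow> x \<in> sum_closure S"
| add: "x \<in> sum_closure S \<Longrightarrow> y \<in> sum_closure S \<Longrightarrow> x + y \<in> sum_closure S"

fun ideal_pow :: "'r::comm_ring_1 set \<Rightarrow> nat \<Rightarrow> 'r set" where
  "ideal_pow I 0 = UNIV"
| "ideal_pow I (Suc k) = sum_closure {a * b | a b. a \<in> I \<and> b \<in> ideal_pow I k}"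

definition coset_of :: "'r::ab_group_add set \<Rightarrow> 'r \<Rightarrow> 'r set" where
  "coset_of I r = {y. y - r \<in> I}"

text \<open>The completion R(L) = lim_k A[L]/J^k, as compatible families of cosets.\<close>
definition completion :: "(nat \<Rightarrow> ('l::comm_monoid_add \<Rightarrow>\<^sub>0 'a::comm_ring_1) set) set" where
  "completion = {x. \<forall>k. (\<exists>r. x k = coset_of (ideal_pow aug_ideal k) r) \<and> x (Suc k) \<subseteq> x k}"

definition group_ring_map :: "('l \<Rightarrow> 'm) \<Rightarrow> ('l \<Rightarrow>\<^sub>0 'a::comm_ring_1) \<Rightarrow> ('m \<Rightarrow>\<^sub>0 'a)" where
  "group_ring_map f x = (\<Sum>l\<in>Poly_Mapping.keys x. Poly_Mapping.single (f l) (Poly_Mapping.lookup x l))"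

definition completion_map ::
  "('l::comm_monoid_add \<Rightarrow> 'm::comm_monoid_add) \<Rightarrow> (nat \<Rightarrow> ('l \<Rightarrow>\<^sub>0 'a::comm_ring_1) set)
     \<Rightarrow> (nat \<Rightarrow> ('m \<Rightarrow>\<^sub>0 'a) set)" where
  "completion_map f x = (\<lambda>k. \<Union>r\<in>x k. coset_of (ideal_pow aug_ideal k) (group_ring_map f r))"

end

theory Submission
  imports Defs
begin


definition is_ideal :: "'r::comm_ring_1 set \<Rightarrow> bool" where
  "is_ideal I \<longleftrightarrow> 0 \<in> I \<and> (\<forall>x\<in>I. \<forall>y\<in>I. x + y \<in> I) \<and> (\<forall>r. \<forall>x\<in>I. r * x \<in> I)"

lemma is_idealD:
  assumes "is_ideal I"
  shows "0 \<in> I" "x \<in> I \<Longrightarrow> y \<in> I \<Longrightarrow> x + y \<in> I" "x \<in> I \<Longrightarrow> r * x \<in> I"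
    "x \<in> I \<Longrightarrow> x * r \<in> I" "x \<in> I \<Longrightarrow> - x \<in> I" "x \<in> I \<Longrightarrow> y \<in> I \<Longrightarrow> x - y \<in> I"
proof -
  show "0 \<in> I" "x \<in> I \<Longrightarrow> y \<in> I \<Longrightarrow> x + y \<in> I" "x \<in> I \<Longrightarrow> r * x \<in> I"
    using assms unfolding is_ideal_def by auto
  show "x \<in> I \<Longrightarrow> x * r \<in> I" using assms unfolding is_ideal_def by (metis mult.commute)
  have neg: "z \<in> I \<Longrightarrow> - z \<in> I" for z
    using assms unfolding is_ideal_def by (metis mult_minus1)
  show "x \<in> I \<Longrightarrow> - x \<in> I" by (rule neg)
  show "x \<in> I \<Longrightarrow> y \<in> I \<Longrightarrow> x - y \<in> I"
    using assms neg unfolding is_ideal_def by (metis diff_conv_add_uminus)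
qed

lemma is_ideal_sum:
  assumes "is_ideal I" "finite A" "\<And>a. a \<in> A \<Longrightarrow> f a \<in> I"
  shows "sum f A \<in> I"
  using assms(2,3) by (induction A rule: finite_induct) (auto intro: is_idealD[OF assms(1)])

lemma sum_closure_sub:
  assumes "S \<subseteq> T" "0 \<in> T" "\<And>x y. x \<in> T \<Longrightarrow> y \<in> T \<Longrightarrow> x + y \<in> T"
  shows "sum_closure S \<subseteq> T"
proof
  fix x assume "x \<in> sum_closure S"
  then show "x \<in> T" by induction (use assms in auto)
qed

lemma ideal_pow_ideal:
  assumes "is_ideal I" shows "is_ideal (ideal_pow I k)"
proof (induction k)
  case 0 then show ?case by (simp add: is_ideal_def)
next
  case (Suc k)
  have "r * x \<in> ideal_pow I (Suc k)" if "x \<in> ideal_pow I (Suc k)" for r x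
  proof -
  from that have "x \<in> sum_closure {a * b |a b. a \<in> I \<and> b \<in> ideal_pow I k}" by simp
  then have "r * x \<in> sum_closure {a * b |a b. a \<in> I \<and> b \<in> ideal_pow I k}"
  proof induction
    case zero then show ?case by (simp add: sum_closure.zero)
  next
    case (base x)
    then obtain a b where ab: "x = a * b" "a \<in> I" "b \<in> ideal_pow I k" by auto
    have "r * b \<in> ideal_pow I k" using is_idealD(3)[OF Suc ab(3)] .
    then have "a * (r * b) \<in> sum_closure {a * b |a b. a \<in> I \<and> b \<in> ideal_pow I k}"
      using ab(2) by (auto intro: sum_closure.base)
    then show ?case using ab(1) by (simp add: ac_simps)
  next
    case (add x y) then show ?case by (simp add: distrib_left sum_closure.add)
  qed
  then show ?thesis by simp
  qed
  then show ?case unfolding is_ideal_def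
    by (auto intro: sum_closure.zero sum_closure.add)
qed

lemma ideal_pow_Suc_sub:
  assumes "is_ideal I" shows "ideal_pow I (Suc k) \<subseteq> ideal_pow I k"
  using ideal_pow_ideal[OF assms, of k]
  by (simp only: ideal_pow.simps, intro sum_closure_sub)
     (auto intro: is_idealD)

lemma ideal_pow_anti:
  assumes "is_ideal I" "m \<le> k" shows "ideal_pow I k \<subseteq> ideal_pow I m"
  using assms(2)
proof (induction k)
  case 0 then show ?case by simp
next
  case (Suc k)
  then show ?case using ideal_pow_Suc_sub[OF assms(1), of k]
    by (cases "m = Suc k") auto
qed

lemma ideal_pow_mult:
  assumes "is_ideal I" "a \<in> ideal_pow I m" "b \<in> ideal_pow I n"
  shows "a * b \<in> ideal_pow I (m + n)"
  using assms(2)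
proof (induction m arbitrary: a)
  case 0 then show ?case using is_idealD(3)[OF ideal_pow_ideal[OF assms(1)] assms(3)] by simp
next
  case (Suc m)
  from Suc.prems have "a \<in> sum_closure {x * y |x y. x \<in> I \<and> y \<in> ideal_pow I m}" by simp
  then have "a * b \<in> sum_closure {x * y |x y. x \<in> I \<and> y \<in> ideal_pow I (m + n)}"
  proof induction
    case zero then show ?case by (simp add: sum_closure.zero)
  next
    case (base z)
    then obtain x y where "z = x * y" "x \<in> I" "y \<in> ideal_pow I m" by auto
    moreover have "y * b \<in> ideal_pow I (m + n)" using Suc.IH[OF \<open>y \<in> ideal_pow I m\<close>] .
    moreover have "z * b = x * (y * b)" using \<open>z = x * y\<close> by (simp add: ac_simps)
    ultimately have "z * b \<in> {x * y |x y. x \<in> I \<and> y \<in> ideal_pow I (m + n)}" by blast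
    then show ?case by (rule sum_closure.base)
  next
    case (add x y) then show ?case by (simp add: distrib_right sum_closure.add)
  qed
  then show ?case by simp
qed

lemma ideal_sub_pow1:
  assumes "a \<in> I" shows "a \<in> ideal_pow I 1"
proof -
  have "a * 1 \<in> {x * y |x y. x \<in> I \<and> y \<in> ideal_pow I 0}"
    using assms by (intro CollectI exI[of _ a] exI[of _ 1]) simp
  then have "a * 1 \<in> sum_closure {x * y |x y. x \<in> I \<and> y \<in> ideal_pow I 0}"
    by (rule sum_closure.base)
  then show ?thesis by simp
qed

lemma ideal_power_mem:
  assumes "is_ideal I" "u \<in> I" shows "u ^ k \<in> ideal_pow I k"
proof (induction k)
  case 0 then show ?case by simp
next
  case (Suc k)
  show ?case using ideal_pow_mult[OF assms(1) ideal_sub_pow1[OF assms(2)] Suc] by simp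
qed

lemma ideal_pow_hom:
  assumes "\<And>x y. h (x + y) = h x + h y" "\<And>x y. h (x * y) = h x * h y" "h 0 = 0"
    and "\<And>x. x \<in> I \<Longrightarrow> h x \<in> I'"
  shows "x \<in> ideal_pow I k \<Longrightarrow> h x \<in> ideal_pow I' k"
proof (induction k arbitrary: x)
  case 0 then show ?case by simp
next
  case (Suc k)
  from Suc.prems have "x \<in> sum_closure {a * b |a b. a \<in> I \<and> b \<in> ideal_pow I k}" by simp
  then have "h x \<in> sum_closure {a * b |a b. a \<in> I' \<and> b \<in> ideal_pow I' k}"
  proof induction
    case zero then show ?case by (simp add: assms(3) sum_closure.zero)
  next
    case (base z)
    then obtain a b where "z = a * b" "a \<in> I" "b \<in> ideal_pow I k" by auto
    with Suc.IH[of b] assms(2,4)[of a] show ?case by (auto intro!: sum_closure.base)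
  next
    case (add x y) then show ?case by (simp add: assms(1) sum_closure.add)
  qed
  then show ?case by simp
qed




lemma pm_decomp:
  "x = (\<Sum>a\<in>Poly_Mapping.keys x. Poly_Mapping.single a (Poly_Mapping.lookup x a))"
proof (rule poly_mapping_eqI)
  fix k
  have "Poly_Mapping.lookup (\<Sum>a\<in>Poly_Mapping.keys x. Poly_Mapping.single a (Poly_Mapping.lookup x a)) k
      = (\<Sum>a\<in>Poly_Mapping.keys x. if a = k then Poly_Mapping.lookup x a else 0)"
    by (simp add: lookup_sum lookup_single when_def eq_commute)
  also have "\<dots> = Poly_Mapping.lookup x k"
    by (simp add: in_keys_iff)
  finally show "Poly_Mapping.lookup x k = Poly_Mapping.lookup (\<Sum>a\<in>Poly_Mapping.keys x. Poly_Mapping.single a (Poly_Mapping.lookup x a)) k" ..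
qed

lemma grm_superset:
  assumes "finite K" "Poly_Mapping.keys x \<subseteq> K"
  shows "group_ring_map f x = (\<Sum>l\<in>K. Poly_Mapping.single (f l) (Poly_Mapping.lookup x l))"
  unfolding group_ring_map_def
  by (rule sum.mono_neutral_left) (use assms in \<open>auto simp: in_keys_iff\<close>)

lemma grm_add: "group_ring_map f (x + y) = group_ring_map f x + group_ring_map f y"
proof -
  let ?K = "Poly_Mapping.keys x \<union> Poly_Mapping.keys y"
  have fin: "finite ?K" by simp
  have "Poly_Mapping.keys (x + y) \<subseteq> ?K" by (rule keys_add)
  then show ?thesis
    using grm_superset[OF fin, of "x+y" f] grm_superset[OF fin, of x f] grm_superset[OF fin, of y f]
    by (simp add: lookup_add single_add sum.distrib)
qed

lemma grm_zero [simp]: "group_ring_map f 0 = 0"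
  by (simp add: group_ring_map_def)

lemma grm_single [simp]: "group_ring_map f (Poly_Mapping.single l c) = Poly_Mapping.single (f l) c"
  by (simp add: group_ring_map_def)

lemma grm_sum: "group_ring_map f (sum g A) = (\<Sum>a\<in>A. group_ring_map f (g a))"
  by (induction A rule: infinite_finite_induct) (auto simp: grm_add)

lemma grm_uminus: "group_ring_map f (- x) = - group_ring_map f x"
  using grm_add[of f "-x" x] by (simp add: eq_neg_iff_add_eq_0)

lemma grm_diff: "group_ring_map f (x - y) = group_ring_map f x - group_ring_map f y"
  using grm_add[of f "x - y" y] by (simp add: algebra_simps)

lemma grm_eq: "(\<Sum>a\<in>Poly_Mapping.keys x. group_ring_map f (Poly_Mapping.single a (Poly_Mapping.lookup x a))) = group_ring_map f x"
  by (simp only: grm_single) (simp only: group_ring_map_def)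

lemma grm_mult:
  fixes f :: "'l::comm_monoid_add \<Rightarrow> 'm::comm_monoid_add"
  assumes hom: "\<And>a b. f (a + b) = f a + f b"
  shows "group_ring_map f (x * y :: 'l \<Rightarrow>\<^sub>0 'a::comm_ring_1) = group_ring_map f x * group_ring_map f y"
proof -
  have "x * y = (\<Sum>a\<in>Poly_Mapping.keys x. Poly_Mapping.single a (Poly_Mapping.lookup x a)) *
                (\<Sum>b\<in>Poly_Mapping.keys y. Poly_Mapping.single b (Poly_Mapping.lookup y b))"
    by (simp flip: pm_decomp)
  also have "\<dots> = (\<Sum>a\<in>Poly_Mapping.keys x. \<Sum>b\<in>Poly_Mapping.keys y.
       Poly_Mapping.single (a + b) (Poly_Mapping.lookup x a * Poly_Mapping.lookup y b))"
    by (simp add: sum_product mult_single)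
  finally have xy: "x * y = \<dots>" .
  have "group_ring_map f (x * y) = (\<Sum>a\<in>Poly_Mapping.keys x. \<Sum>b\<in>Poly_Mapping.keys y.
       Poly_Mapping.single (f a + f b) (Poly_Mapping.lookup x a * Poly_Mapping.lookup y b))"
    by (simp add: xy grm_sum hom)
  also have "\<dots> = (\<Sum>a\<in>Poly_Mapping.keys x. Poly_Mapping.single (f a) (Poly_Mapping.lookup x a)) *
                (\<Sum>b\<in>Poly_Mapping.keys y. Poly_Mapping.single (f b) (Poly_Mapping.lookup y b))"
    by (simp add: sum_product mult_single)
  also have "\<dots> = group_ring_map f x * group_ring_map f y"
    by (simp add: group_ring_map_def)
  finally show ?thesis .
qed

lemma grm_one:
  assumes "f 0 = 0"
  shows "group_ring_map f (1 :: 'l::zero \<Rightarrow>\<^sub>0 'a::comm_ring_1) = 1"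
proof -
  have "(1 :: 'l \<Rightarrow>\<^sub>0 'a) = Poly_Mapping.single 0 1" by simp
  then show ?thesis using assms by (metis grm_single single_one)
qed

lemma grm_comp: "group_ring_map g (group_ring_map f x) = group_ring_map (g \<circ> f) x"
proof -
  have "group_ring_map f x = (\<Sum>l\<in>Poly_Mapping.keys x. Poly_Mapping.single (f l) (Poly_Mapping.lookup x l))"
    by (simp only: group_ring_map_def)
  then show ?thesis by (simp add: grm_sum group_ring_map_def[of "g \<circ> f"])
qed

lemma single_sum: "Poly_Mapping.single k (sum g A) = (\<Sum>a\<in>A. Poly_Mapping.single k (g a))"
  by (induction A rule: infinite_finite_induct) (auto simp: single_add)

lemma aug_as_grm:
  "group_ring_map (\<lambda>_. 0::'l::zero) x = Poly_Mapping.single 0 (augmentation x)"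
  by (simp add: group_ring_map_def augmentation_def single_sum)




lemma aug_add: "augmentation (x + y) = augmentation x + augmentation y"
proof -
  have "Poly_Mapping.single 0 (augmentation (x + y)) = Poly_Mapping.single 0 (augmentation x + augmentation y)"
    by (simp only: single_add flip: aug_as_grm grm_add)
  then show ?thesis by (metis lookup_single_eq)
qed

lemma aug_mult: "augmentation (x * y :: 'l::comm_monoid_add \<Rightarrow>\<^sub>0 'a::comm_ring_1) = augmentation x * augmentation y"
proof -
  have "Poly_Mapping.single (0::'l) (augmentation (x * y)) = Poly_Mapping.single 0 (augmentation x * augmentation y)"
    using grm_mult[of "\<lambda>_. 0::'l" x y] by (simp add: aug_as_grm mult_single)
  then show ?thesis by (metis lookup_single_eq)
qed

lemma aug_single [simp]: "augmentation (Poly_Mapping.single l c) = c"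
  by (simp add: augmentation_def)

lemma aug_zero [simp]: "augmentation 0 = 0"
  by (simp add: augmentation_def)

lemma aug_one [simp]: "augmentation (1 :: 'l::zero \<Rightarrow>\<^sub>0 'a::comm_ring_1) = 1"
  by (metis aug_single single_one)

lemma aug_uminus: "augmentation (- x) = - augmentation x"
  using aug_add[of "-x" x] by (simp add: eq_neg_iff_add_eq_0)

lemma aug_diff: "augmentation (x - y) = augmentation x - augmentation y"
  using aug_add[of "x - y" y] by (simp add: algebra_simps)

lemma aug_sum: "augmentation (sum g A) = (\<Sum>a\<in>A. augmentation (g a))"
  by (induction A rule: infinite_finite_induct) (auto simp: aug_add)

lemma aug_power: "augmentation (x ^ n :: 'l::comm_monoid_add \<Rightarrow>\<^sub>0 'a::comm_ring_1) = augmentation x ^ n"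
  by (induction n) (auto simp: aug_mult)

lemma aug_of_nat [simp]: "augmentation (of_nat n :: 'l::comm_monoid_add \<Rightarrow>\<^sub>0 'a::comm_ring_1) = of_nat n"
  by (metis aug_single single_of_nat)

lemma aug_grm: "augmentation (group_ring_map f x) = augmentation x"
proof -
  have "Poly_Mapping.single 0 (augmentation (group_ring_map f x)) = Poly_Mapping.single 0 (augmentation x)"
    by (simp add: grm_comp o_def flip: aug_as_grm)
  then show ?thesis by (metis lookup_single_eq)
qed

lemma aug_ideal_ideal: "is_ideal (aug_ideal :: ('l::comm_monoid_add \<Rightarrow>\<^sub>0 'a::comm_ring_1) set)"
  unfolding is_ideal_def aug_ideal_def by (simp add: aug_add aug_mult)

inductive_set zring :: "'r::comm_ring_1 \<Rightarrow> 'r set" for u where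
  one: "1 \<in> zring u"
| gen: "u \<in> zring u"
| add: "x \<in> zring u \<Longrightarrow> y \<in> zring u \<Longrightarrow> x + y \<in> zring u"
| neg: "x \<in> zring u \<Longrightarrow> - x \<in> zring u"
| mul: "x \<in> zring u \<Longrightarrow> y \<in> zring u \<Longrightarrow> x * y \<in> zring u"

lemma zring_zero: "0 \<in> zring u"
  using zring.add[OF zring.one zring.neg[OF zring.one]] by simp

definition Dset :: "'r::comm_ring_1 \<Rightarrow> int \<Rightarrow> 'r set" where
  "Dset u c = {of_int c + u * w | w. w \<in> zring u}"

lemma Dset_add: "a \<in> Dset u c1 \<Longrightarrow> b \<in> Dset u c2 \<Longrightarrow> a + b \<in> Dset u (c1 + c2)"
  unfolding Dset_def
proof clarify
  fix w1 w2 assume "w1 \<in> zring u" "w2 \<in> zring u"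
  then show "\<exists>w. of_int c1 + u * w1 + (of_int c2 + u * w2) = of_int (c1 + c2) + u * w \<and> w \<in> zring u"
    by (intro exI[of _ "w1 + w2"]) (auto intro: zring.add simp: algebra_simps)
qed

lemma Dset_mul: "a \<in> Dset u c1 \<Longrightarrow> b \<in> Dset u c2 \<Longrightarrow> a * b \<in> Dset u (c1 * c2)"
  unfolding Dset_def
proof clarify
  fix w1 w2 assume w: "w1 \<in> zring u" "w2 \<in> zring u"
  let ?w = "of_int c1 * w2 + of_int c2 * w1 + u * w1 * w2"
  have ci: "of_int c \<in> zring u" for c
  proof (induction c rule: int_induct[where k=0])
    case base then show ?case by (simp add: zring_zero)
  next
    case (step1 i) then show ?case by (simp add: zring.add zring.one)
  next
    case (step2 i)
    have "of_int (i - 1) = of_int i + - (1::'a)" by simp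
    then show ?case using step2 by (metis zring.add zring.neg zring.one)
  qed
  have "?w \<in> zring u" using w ci by (intro zring.add zring.mul zring.gen) auto
  then show "\<exists>w. (of_int c1 + u * w1) * (of_int c2 + u * w2) = of_int (c1 * c2) + u * w \<and> w \<in> zring u"
    by (intro exI[of _ ?w]) (auto simp: algebra_simps)
qed

lemma zring_Dset: "z \<in> zring u \<Longrightarrow> \<exists>c. z \<in> Dset u c"
proof (induction rule: zring.induct)
  case one
  have "1 \<in> Dset u 1" unfolding Dset_def by (auto intro!: exI[of _ 0] zring_zero)
  then show ?case by blast
next
  case gen
  have "u \<in> Dset u 0" unfolding Dset_def by (auto intro!: exI[of _ 1] zring.one)
  then show ?case by blast
next
  case (add x y) then show ?case using Dset_add by blast
next
  case (neg x)
  then obtain c where "x \<in> Dset u c" by blast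
  then obtain w where w: "w \<in> zring u" "x = of_int c + u * w" unfolding Dset_def by blast
  then have "- x = of_int (- c) + u * (- w)" by simp
  then have "- x \<in> Dset u (- c)" unfolding Dset_def using zring.neg[OF w(1)] by blast
  then show ?case by blast
next
  case (mul x y) then show ?case using Dset_mul by blast
qed

lemma Dset_power: "a \<in> Dset u c \<Longrightarrow> a ^ n \<in> Dset u (c ^ n)"
proof (induction n)
  case 0
  have "1 \<in> Dset u 1" unfolding Dset_def by (auto intro!: exI[of _ 0] zring_zero)
  then show ?case by simp
next
  case (Suc n) then show ?case using Dset_mul[of a u c "a ^ n" "c ^ n"] by simp
qed

lemma surj_core:
  fixes u :: "'r::comm_ring_1"
  assumes S1: "1 \<in> S" and Sadd: "\<And>x y. x \<in> S \<Longrightarrow> y \<in> S \<Longrightarrow> x + y \<in> S"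
    and Smul: "\<And>x y. x \<in> S \<Longrightarrow> y \<in> S \<Longrightarrow> x * y \<in> S"
    and Sneg: "\<And>x. x \<in> S \<Longrightarrow> - x \<in> S"
    and I: "is_ideal I"
    and e: "e \<in> S" "e * of_nat d = 1"
    and t: "(1 + u) ^ d - 1 \<in> S"
    and uk: "u ^ k \<in> I"
  shows "u \<in> {s + i | s i. s \<in> S \<and> i \<in> I}"
proof -
  define SI where "SI = {s + i | s i. s \<in> S \<and> i \<in> I}"
  have S0: "0 \<in> S" using Sadd[OF S1 Sneg[OF S1]] by simp
  have SI_add: "x + y \<in> SI" if xy: "x \<in> SI" "y \<in> SI" for x y
  proof -
    obtain s1 i1 s2 i2 where "x = s1 + i1" "y = s2 + i2" "s1 \<in> S" "s2 \<in> S" "i1 \<in> I" "i2 \<in> I"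
      using xy unfolding SI_def by fastforce
    then show ?thesis unfolding SI_def
      by (intro CollectI exI[of _ "s1 + s2"] exI[of _ "i1 + i2"])
        (auto simp: Sadd is_idealD(2)[OF I] algebra_simps)
  qed
  have SI_neg: "- x \<in> SI" if xy: "x \<in> SI" for x
  proof -
    obtain s1 i1 where "x = s1 + i1" "s1 \<in> S" "i1 \<in> I"
      using xy unfolding SI_def by blast
    then show ?thesis unfolding SI_def
      by (intro CollectI exI[of _ "- s1"] exI[of _ "- i1"]) (auto simp: Sneg is_idealD(5)[OF I])
  qed
  have SI_smul: "s * x \<in> SI" if sx: "s \<in> S" "x \<in> SI" for s x
  proof -
    obtain s1 i1 where "x = s1 + i1" "s1 \<in> S" "i1 \<in> I"
      using sx unfolding SI_def by blast
    then have "s * x = s * s1 + s * i1" "s * s1 \<in> S" "s * i1 \<in> I"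
      using sx(1) by (auto simp: Smul is_idealD(3)[OF I] distrib_left)
    then show ?thesis unfolding SI_def by blast
  qed
  have SI_I: "i \<in> SI" if "i \<in> I" for i
    unfolding SI_def using that S0 by force
  have SI_S: "s \<in> SI" if "s \<in> S" for s
    unfolding SI_def using that is_idealD(1)[OF I] by force
  have Sint: "of_int c \<in> S" for c
  proof (induction c rule: int_induct[where k=0])
    case base then show ?case by (simp add: S0)
  next
    case (step1 i) then show ?case by (simp add: Sadd S1)
  next
    case (step2 i)
    have "of_int (i - 1) = of_int i + - (1::'r)" by simp
    then show ?case using step2 by (metis Sadd Sneg S1)
  qed
  define P where "P j \<longleftrightarrow> (\<forall>w\<in>zring u. u ^ j * w \<in> SI)" for j
  have base: "P j" if "k \<le> j" for j
    unfolding P_def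
  proof
    fix w
    have "u ^ j = u ^ k * u ^ (j - k)" using that
      by (simp flip: power_add)
    then have "u ^ j * w = u ^ k * (u ^ (j - k) * w)" by (simp add: mult.assoc)
    also have "\<dots> \<in> I" using is_idealD(4)[OF I uk] .
    finally show "u ^ j * w \<in> SI" by (rule SI_I)
  qed
  define g where "g = (\<Sum>i<d. (1 + u) ^ i)"
  have tg: "(1 + u) ^ d - 1 = u * g"
    unfolding g_def using power_diff_1_eq[of "1 + u" d] by simp
  have g_D: "g \<in> Dset u (int d)"
  proof -
    have p1: "1 + u \<in> Dset u 1" unfolding Dset_def by (auto intro!: exI[of _ 1] zring.one)
    have "(\<Sum>i<n. (1 + u) ^ i) \<in> Dset u (int n)" for n
    proof (induction n)
      case 0 then show ?case unfolding Dset_def by (auto intro!: exI[of _ 0] zring_zero)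
    next
      case (Suc n)
      from Dset_add[OF Suc Dset_power[OF p1, of n]] show ?case by (simp add: add.commute)
    qed
    then show ?thesis unfolding g_def .
  qed
  have step: "P j" if "P (Suc j)" for j
  proof -
    have uj: "u ^ j \<in> SI"
    proof -
      obtain v where v: "v \<in> zring u" "g ^ j = of_int (int d ^ j) + u * v"
        using Dset_power[OF g_D, of j] unfolding Dset_def by blast
      have tj: "((1 + u) ^ d - 1) ^ j = of_nat d ^ j * u ^ j + u ^ Suc j * v"
        by (simp add: tg power_mult_distrib v(2) algebra_simps)
      have "u ^ Suc j * v \<in> SI" using that v(1) unfolding P_def by blast
      moreover have "((1 + u) ^ d - 1) ^ j \<in> S"
        by (induction j) (auto simp: S1 Smul t)
      ultimately have "of_nat d ^ j * u ^ j \<in> SI"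
        using SI_add[OF SI_S SI_neg] tj by (metis add_diff_cancel_right' diff_conv_add_uminus)
      moreover have ej: "e ^ j \<in> S" for j by (induction j) (auto simp: S1 Smul e(1))
      ultimately have "e ^ j * (of_nat d ^ j * u ^ j) \<in> SI"
        using SI_smul by blast
      moreover have "e ^ j * (of_nat d ^ j * u ^ j) = u ^ j"
        by (simp add: mult.assoc[symmetric] e(2) flip: power_mult_distrib)
      ultimately show ?thesis by simp
    qed
    show ?thesis unfolding P_def
    proof
      fix w assume "w \<in> zring u"
      then obtain c where "w \<in> Dset u c" using zring_Dset by blast
      then obtain w' where w': "w' \<in> zring u" "w = of_int c + u * w'" unfolding Dset_def by blast
      have "u ^ j * w = of_int c * u ^ j + u ^ Suc j * w'" by (simp add: w'(2) algebra_simps)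
      moreover have "u ^ Suc j * w' \<in> SI" using that w'(1) unfolding P_def by blast
      moreover have "of_int c * u ^ j \<in> SI" using SI_smul[OF Sint uj] .
      ultimately show "u ^ j * w \<in> SI" using SI_add by simp
    qed
  qed
  have "P (k - n)" for n
  proof (induction n)
    case 0 then show ?case by (rule base) simp
  next
    case (Suc n)
    show ?case
    proof (cases "k - Suc n = k - n")
      case True then show ?thesis using Suc by simp
    next
      case False
      then have "k - n = Suc (k - Suc n)" by simp
      then show ?thesis using step Suc by metis
    qed
  qed
  then have "\<forall>j. P j"
    by (metis base diff_diff_cancel nat_le_linear)
  then have "u ^ 1 * 1 \<in> SI" unfolding P_def using zring.one by blast
  then show ?thesis unfolding SI_def by simp
qed




abbreviation J :: "('l::comm_monoid_add \<Rightarrow>\<^sub>0 'a::comm_ring_1) set" where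
  "J \<equiv> aug_ideal"

lemma J_mem: "x \<in> J \<longleftrightarrow> augmentation x = 0"
  by (simp add: aug_ideal_def)

lemma single_pow: "(Poly_Mapping.single (l::'l::ring_1) (1::'a::comm_ring_1)) ^ d = Poly_Mapping.single (of_nat d * l) 1"
  by (induction d) (auto simp: mult_single distrib_right)

lemma md_mult: "group_ring_map (\<lambda>l::'l::ring_1. of_nat d * l) (x * y :: 'l \<Rightarrow>\<^sub>0 'a::comm_ring_1)
   = group_ring_map (\<lambda>l. of_nat d * l) x * group_ring_map (\<lambda>l. of_nat d * l) y"
  by (rule grm_mult) (simp add: distrib_left)

lemma grm_scal: "f 0 = 0 \<Longrightarrow> group_ring_map f (Poly_Mapping.single 0 c) = Poly_Mapping.single 0 c"
  by simp

lemma J_decomp: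
  fixes a :: "'l::comm_monoid_add \<Rightarrow>\<^sub>0 'a::comm_ring_1"
  assumes "a \<in> J"
  shows "a = (\<Sum>l\<in>Poly_Mapping.keys a. Poly_Mapping.single 0 (Poly_Mapping.lookup a l) * (Poly_Mapping.single l 1 - 1))"
proof -
  have "(\<Sum>l\<in>Poly_Mapping.keys a. Poly_Mapping.single 0 (Poly_Mapping.lookup a l) * (Poly_Mapping.single l 1 - 1))
      = (\<Sum>l\<in>Poly_Mapping.keys a. Poly_Mapping.single l (Poly_Mapping.lookup a l)) - 
        Poly_Mapping.single 0 (augmentation a)"
    by (simp add: right_diff_distrib mult_single sum_subtractf augmentation_def single_sum)
  also have "\<dots> = a" using assms by (simp add: J_mem flip: pm_decomp)
  finally show ?thesis by simp
qed

lemma lemA: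
  fixes a :: "'l::ring_1 \<Rightarrow>\<^sub>0 'a::comm_ring_1"
  assumes "a \<in> J"
  shows "group_ring_map (\<lambda>l. of_nat d * l) a - of_nat d * a \<in> ideal_pow J 2"
proof -
  let ?md = "group_ring_map (\<lambda>l::'l. of_nat d * l) :: ('l \<Rightarrow>\<^sub>0 'a) \<Rightarrow> _"
  have I2: "is_ideal (ideal_pow (J :: ('l \<Rightarrow>\<^sub>0 'a) set) 2)"
    by (rule ideal_pow_ideal[OF aug_ideal_ideal])
  have key: "?md (Poly_Mapping.single l 1 - 1) - of_nat d * (Poly_Mapping.single l 1 - 1) \<in> ideal_pow J 2" for l
  proof -
    define v :: "'l \<Rightarrow>\<^sub>0 'a" where "v = Poly_Mapping.single l 1 - 1"
    define g where "g = (\<Sum>i<d. (1 + v) ^ i)"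
    have "?md v = (1 + v) ^ d - 1"
      unfolding v_def by (simp add: grm_diff grm_one single_pow)
    also have "\<dots> = v * g" unfolding g_def using power_diff_1_eq[of "1 + v" d] by simp
    finally have "?md v - of_nat d * v = v * (g - of_nat d)" by (simp add: algebra_simps)
    moreover have "v \<in> J" unfolding v_def J_mem by (simp add: aug_diff)
    moreover have "g - of_nat d \<in> J"
    proof -
      have "augmentation (1 + v) = 1" unfolding v_def by (simp add: aug_add aug_diff)
      then show ?thesis unfolding J_mem g_def by (simp add: aug_diff aug_sum aug_power)
    qed
    ultimately show ?thesis
      using ideal_pow_mult[OF aug_ideal_ideal ideal_sub_pow1 ideal_sub_pow1, of v "g - of_nat d"]
      by (simp add: v_def numeral_2_eq_2)
  qed
  define c where "c l = (Poly_Mapping.single 0 (Poly_Mapping.lookup a l) :: 'l \<Rightarrow>\<^sub>0 'a)" for l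
  define v where "v l = (Poly_Mapping.single l 1 - 1 :: 'l \<Rightarrow>\<^sub>0 'a)" for l
  have A: "a = (\<Sum>l\<in>Poly_Mapping.keys a. c l * v l)"
    unfolding c_def v_def by (rule J_decomp[OF assms])
  have mc: "?md (c l) = c l" for l unfolding c_def by simp
  have "?md a = ?md (\<Sum>l\<in>Poly_Mapping.keys a. c l * v l)" using arg_cong[OF A, of ?md] .
  also have "\<dots> = (\<Sum>l\<in>Poly_Mapping.keys a. c l * ?md (v l))"
    by (simp only: grm_sum md_mult mc)
  finally have e1: "?md a = (\<Sum>l\<in>Poly_Mapping.keys a. c l * ?md (v l))" .
  have e2: "of_nat d * a = (\<Sum>l\<in>Poly_Mapping.keys a. c l * (of_nat d * v l))"
    by (subst A) (simp add: sum_distrib_left ac_simps)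
  have "?md a - of_nat d * a = (\<Sum>l\<in>Poly_Mapping.keys a. c l *
       (?md (v l) - of_nat d * v l))"
    unfolding e1 e2 by (simp add: sum_subtractf right_diff_distrib)
  also have "\<dots> \<in> ideal_pow J 2"
    by (rule is_ideal_sum[OF I2]) (auto intro: is_idealD(3)[OF I2] key[unfolded v_def[symmetric]])
  finally show ?thesis .
qed

lemma lemB:
  fixes z :: "'l::ring_1 \<Rightarrow>\<^sub>0 'a::comm_ring_1"
  assumes "z \<in> ideal_pow J m"
  shows "group_ring_map (\<lambda>l. of_nat d * l) z - of_nat d ^ m * z \<in> ideal_pow J (Suc m)"
  using assms
proof (induction m arbitrary: z)
  case 0
  have "group_ring_map (\<lambda>l. of_nat d * l) z - z \<in> J" by (simp add: J_mem aug_diff aug_grm)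
  from ideal_sub_pow1[OF this] show ?case by (metis One_nat_def mult_1 power_0)
next
  case (Suc m)
  let ?md = "group_ring_map (\<lambda>l::'l. of_nat d * l) :: ('l \<Rightarrow>\<^sub>0 'a) \<Rightarrow> _"
  have Jid: "is_ideal (J :: ('l \<Rightarrow>\<^sub>0 'a) set)" by (rule aug_ideal_ideal)
  have I: "is_ideal (ideal_pow (J :: ('l \<Rightarrow>\<^sub>0 'a) set) (Suc (Suc m)))"
    by (rule ideal_pow_ideal[OF Jid])
  from Suc.prems have "z \<in> sum_closure {a * b |a b. a \<in> J \<and> b \<in> ideal_pow J m}" by simp
  then show ?case
  proof induction
    case zero
    have "?md 0 - of_nat d ^ Suc m * 0 = 0" by simp
    then show ?case using is_idealD(1)[OF I] by (simp only:)
  next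
    case (base x)
    then obtain a b where ab: "x = a * b" "a \<in> J" "b \<in> ideal_pow J m" by auto
    define p where "p = ?md a - of_nat d * a"
    define q where "q = ?md b - of_nat d ^ m * b"
    have p: "p \<in> ideal_pow J 2" unfolding p_def by (rule lemA[OF ab(2)])
    have q: "q \<in> ideal_pow J (Suc m)" unfolding q_def by (rule Suc.IH[OF ab(3)])
    have a1: "a \<in> ideal_pow J 1" by (rule ideal_sub_pow1[OF ab(2)])
    have eq: "?md x - of_nat d ^ Suc m * x = of_nat d * (a * q) + of_nat d ^ m * (p * b) + p * q"
      unfolding ab(1) md_mult p_def q_def by (simp add: algebra_simps)
    have f1: "a * q \<in> ideal_pow J (Suc (Suc m))"
      using ideal_pow_mult[OF Jid a1 q] by simp
    have f2: "p * b \<in> ideal_pow J (Suc (Suc m))"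
      using ideal_pow_mult[OF Jid p ab(3)] by simp
    have f3: "p * q \<in> ideal_pow J (Suc (Suc m))"
    proof -
      have "p * q \<in> ideal_pow J (2 + Suc m)" using ideal_pow_mult[OF Jid p q] .
      then show ?thesis using ideal_pow_anti[OF Jid, of "Suc (Suc m)" "2 + Suc m"] by auto
    qed
    show ?case unfolding eq
      by (intro is_idealD(2)[OF I] is_idealD(3)[OF I] f1 f2 f3)
  next
    case (add x y)
    have eq: "?md (x + y) - of_nat d ^ Suc m * (x + y) =
      (?md x - of_nat d ^ Suc m * x) + (?md y - of_nat d ^ Suc m * y)"
      by (simp add: grm_add algebra_simps)
    show ?case unfolding eq by (rule is_idealD(2)[OF I add.IH(1) add.IH(2)])
  qed
qed

lemma lemC:
  fixes z :: "'l::ring_1 \<Rightarrow>\<^sub>0 'a::comm_ring_1"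
  assumes "group_ring_map (\<lambda>l. of_nat d * l) z \<in> ideal_pow J k"
    and E: "of_nat d * E = (1 :: 'l \<Rightarrow>\<^sub>0 'a)"
  shows "z \<in> ideal_pow J k"
proof -
  have Jid: "is_ideal (J :: ('l \<Rightarrow>\<^sub>0 'a) set)" by (rule aug_ideal_ideal)
  have "m \<le> k \<Longrightarrow> z \<in> ideal_pow J m" for m
  proof (induction m)
    case 0 then show ?case by simp
  next
    case (Suc m)
    have I: "is_ideal (ideal_pow (J :: ('l \<Rightarrow>\<^sub>0 'a) set) (Suc m))" by (rule ideal_pow_ideal[OF Jid])
    have zm: "z \<in> ideal_pow J m" using Suc by simp
    have "group_ring_map (\<lambda>l. of_nat d * l) z \<in> ideal_pow J (Suc m)"
      using assms(1) ideal_pow_anti[OF Jid Suc.prems] by auto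
    then have "of_nat d ^ m * z \<in> ideal_pow J (Suc m)"
      using is_idealD(6)[OF I _ lemB[OF zm, of d]] by fastforce
    then have "E ^ m * (of_nat d ^ m * z) \<in> ideal_pow J (Suc m)"
      by (rule is_idealD(3)[OF I])
    moreover have "E ^ m * (of_nat d ^ m * z) = z"
      by (simp add: mult.assoc[symmetric] E mult.commute[of E] flip: power_mult_distrib)
    ultimately show ?case by simp
  qed
  then show ?thesis by simp
qed




lemma coset_eq_iff:
  assumes "0 \<in> G" "\<And>x y. x \<in> G \<Longrightarrow> y \<in> G \<Longrightarrow> x - y \<in> G"
  shows "coset_of G (a::'x::ab_group_add) = coset_of G b \<longleftrightarrow> a - b \<in> G"
proof
  assume "coset_of G a = coset_of G b"
  moreover have "a \<in> coset_of G a" using assms(1) by (simp add: coset_of_def)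
  ultimately show "a - b \<in> G" by (simp add: coset_of_def)
next
  assume ab: "a - b \<in> G"
  have neg: "- x \<in> G" if "x \<in> G" for x using assms(2)[OF assms(1) that] by simp
  have add: "x + y \<in> G" if "x \<in> G" "y \<in> G" for x y using assms(2)[OF that(1) neg[OF that(2)]] by simp
  show "coset_of G a = coset_of G b"
    unfolding coset_of_def
  proof (intro Collect_cong iffI)
    fix y assume "y - a \<in> G" then have "(y - a) + (a - b) \<in> G" using add ab by blast
    then show "y - b \<in> G" by simp
  next
    fix y assume "y - b \<in> G" then have "(y - b) - (a - b) \<in> G" using assms(2) ab by blast
    then show "y - a \<in> G" by simp
  qed
qed

lemma coset_self: "0 \<in> G \<Longrightarrow> a \<in> coset_of G a"
  by (simp add: coset_of_def)

lemma glue: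
  fixes F :: "'x::ab_group_add \<Rightarrow> 'y::ab_group_add" and I :: "nat \<Rightarrow> 'x set" and I' :: "nat \<Rightarrow> 'y set"
  assumes I0: "\<And>k. 0 \<in> I k" and Id: "\<And>k x y. x \<in> I k \<Longrightarrow> y \<in> I k \<Longrightarrow> x - y \<in> I k"
    and I'0: "\<And>k. 0 \<in> I' k" and I'd: "\<And>k x y. x \<in> I' k \<Longrightarrow> y \<in> I' k \<Longrightarrow> x - y \<in> I' k"
    and anti: "\<And>k. I (Suc k) \<subseteq> I k" and anti': "\<And>k. I' (Suc k) \<subseteq> I' k"
    and Fd: "\<And>x y. F (x - y) = F x - F y"
    and a: "\<And>k x. x \<in> I k \<Longrightarrow> F x \<in> I' k"
    and b: "\<And>k y. \<exists>x. y - F x \<in> I' k"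
    and c: "\<And>k x. F x \<in> I' k \<Longrightarrow> x \<in> I k"
  shows "bij_betw (\<lambda>X k. \<Union>r\<in>X k. coset_of (I' k) (F r))
           {X. \<forall>k. (\<exists>r. X k = coset_of (I k) r) \<and> X (Suc k) \<subseteq> X k}
           {Y. \<forall>k. (\<exists>r. Y k = coset_of (I' k) r) \<and> Y (Suc k) \<subseteq> Y k}"
proof -
  define M where "M = (\<lambda>X k. \<Union>r\<in>X k. coset_of (I' k) (F r))"
  have ceq: "coset_of (I k) a = coset_of (I k) b \<longleftrightarrow> a - b \<in> I k" for k a b
    by (rule coset_eq_iff[OF I0 Id])
  have ceq': "coset_of (I' k) a = coset_of (I' k) b \<longleftrightarrow> a - b \<in> I' k" for k a b
    by (rule coset_eq_iff[OF I'0 I'd])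
  have Mk: "M X k = coset_of (I' k) (F r)" if "X k = coset_of (I k) r" for X k r
  proof -
    have "coset_of (I' k) (F s) = coset_of (I' k) (F r)" if "s \<in> X k" for s
    proof -
      have "s - r \<in> I k" using that \<open>X k = _\<close> by (simp add: coset_of_def)
      then have "F s - F r \<in> I' k" using a[of "s - r" k] by (simp add: Fd)
      then show ?thesis unfolding ceq' .
    qed
    moreover have "r \<in> X k" using that coset_self[OF I0] by simp
    ultimately show ?thesis unfolding M_def by blast
  qed
  let ?A = "{X. \<forall>k. (\<exists>r. X k = coset_of (I k) r) \<and> X (Suc k) \<subseteq> X k}"
  let ?B = "{Y. \<forall>k. (\<exists>r. Y k = coset_of (I' k) r) \<and> Y (Suc k) \<subseteq> Y k}"
  have into: "M X \<in> ?B" if X: "X \<in> ?A" for X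
  proof -
    have "(\<exists>r. M X k = coset_of (I' k) r) \<and> M X (Suc k) \<subseteq> M X k" for k
    proof
      obtain r where "X k = coset_of (I k) r" using X by blast
      then show "\<exists>r. M X k = coset_of (I' k) r" using Mk by blast
      show "M X (Suc k) \<subseteq> M X k"
      proof
        fix z assume "z \<in> M X (Suc k)"
        then obtain r where r: "r \<in> X (Suc k)" "z - F r \<in> I' (Suc k)"
          unfolding M_def coset_of_def by blast
        then have "r \<in> X k" "z - F r \<in> I' k" using X anti' by blast+
        then show "z \<in> M X k" unfolding M_def coset_of_def by blast
      qed
    qed
    then show ?thesis by blast
  qed
  have inj: "inj_on M ?A"
  proof (rule inj_onI)
    fix X Y assume X: "X \<in> ?A" and Y: "Y \<in> ?A" and eq: "M X = M Y"
    show "X = Y"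
    proof
      fix k
      obtain r s where r: "X k = coset_of (I k) r" and s: "Y k = coset_of (I k) s" using X Y by blast
      have "M X k = M Y k" using eq by simp
      then have "coset_of (I' k) (F r) = coset_of (I' k) (F s)"
        using Mk[of X k r, OF r] Mk[of Y k s, OF s] by simp
      then have "F (r - s) \<in> I' k" unfolding ceq' Fd .
      then have "r - s \<in> I k" by (rule c)
      then show "X k = Y k" using r s ceq by simp
    qed
  qed
  have surj: "Y \<in> M ` ?A" if Y: "Y \<in> ?B" for Y
  proof -
    have "\<forall>k. \<exists>r. Y k = coset_of (I' k) r" using Y by blast
    then have "\<exists>s. \<forall>k. Y k = coset_of (I' k) (s k)" by (rule choice)
    then obtain s where s: "\<And>k. Y k = coset_of (I' k) (s k)" by blast
    have "\<forall>k. \<exists>x. s k - F x \<in> I' k" using b by blast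
    then have "\<exists>x. \<forall>k. s k - F (x k) \<in> I' k" by (rule choice)
    then obtain x where x: "\<And>k. s k - F (x k) \<in> I' k" by blast
    define X where "X k = coset_of (I k) (x k)" for k
    have xs: "x (Suc k) - x k \<in> I k" for k
    proof -
      have "Y (Suc k) \<subseteq> Y k" using Y by blast
      moreover have "s (Suc k) \<in> Y (Suc k)" using s coset_self[OF I'0] by simp
      ultimately have "s (Suc k) \<in> Y k" by blast
      then have d1: "s (Suc k) - s k \<in> I' k" using s by (simp add: coset_of_def)
      have d2: "s (Suc k) - F (x (Suc k)) \<in> I' k" using x anti' by blast
      have "(s (Suc k) - s k) - (s (Suc k) - F (x (Suc k))) + (s k - F (x k)) \<in> I' k"
      proof -
        have "(s (Suc k) - s k) - (s (Suc k) - F (x (Suc k))) \<in> I' k" using I'd d1 d2 by blast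
        moreover have "- (s k - F (x k)) \<in> I' k" using I'd[OF I'0 x] by simp
        ultimately have "(s (Suc k) - s k) - (s (Suc k) - F (x (Suc k))) - (- (s k - F (x k))) \<in> I' k"
          by (rule I'd)
        then show ?thesis by simp
      qed
      then have "F (x (Suc k) - x k) \<in> I' k" by (simp add: Fd algebra_simps)
      then show ?thesis by (rule c)
    qed
    have XA: "X \<in> ?A"
    proof -
      have "X (Suc k) \<subseteq> X k" for k
      proof
        fix z assume "z \<in> X (Suc k)"
        then have "z - x (Suc k) \<in> I k" using anti unfolding X_def coset_of_def by blast
        moreover have "- (x (Suc k) - x k) \<in> I k" using Id[OF I0 xs] by simp
        ultimately have "(z - x (Suc k)) - (- (x (Suc k) - x k)) \<in> I k"
          by (rule Id)
        then show "z \<in> X k" unfolding X_def coset_of_def by simp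
      qed
      then show ?thesis unfolding X_def by blast
    qed
    have "M X = Y"
    proof
      fix k
      have "M X k = coset_of (I' k) (F (x k))" using Mk[of X k "x k"] X_def by simp
      also have "\<dots> = coset_of (I' k) (s k)" unfolding ceq'
      proof -
        have "0 - (s k - F (x k)) \<in> I' k" using I'd[OF I'0 x] .
        then show "F (x k) - s k \<in> I' k" by simp
      qed
      finally show "M X k = Y k" using s by simp
    qed
    then show ?thesis using XA by blast
  qed
  have s1: "M ` ?A \<subseteq> ?B" by (rule image_subsetI) (rule into)
  have s2: "?B \<subseteq> M ` ?A" by (rule subsetI) (rule surj)
  have "bij_betw M ?A ?B" unfolding bij_betw_def using inj s1 s2 by (intro conjI equalityI)
  then show ?thesis by (simp only: M_def)
qed




lemma hom_basic:
  assumes "grp_hom (f :: 'l::ab_group_add \<Rightarrow> 'm::ab_group_add)"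
  shows "f 0 = 0" "f (- x) = - f x" "f (x + y) = f x + f y" "f (x - y) = f x - f y"
proof -
  have h: "f (a + b) = f a + f b" for a b using assms by (simp add: grp_hom_def)
  show f0: "f 0 = 0" using h[of 0 0] by simp
  show "f (- x) = - f x" using h[of "-x" x] f0 by (simp add: eq_neg_iff_add_eq_0)
  show "f (x + y) = f x + f y" by (rule h)
  show "f (x - y) = f x - f y" using h[of "x - y" y] by (simp add: algebra_simps)
qed

lemma hom_nat:
  assumes "grp_hom (f :: 'l::ring_1 \<Rightarrow> 'm::ring_1)"
  shows "f (of_nat n * x) = of_nat n * f x"
  by (induction n) (auto simp: hom_basic[OF assms] distrib_right)

lemma sum_in_range:
  assumes "grp_hom (f :: 'l::ab_group_add \<Rightarrow> 'm::ab_group_add)" "\<And>a. a \<in> A \<Longrightarrow> g a \<in> range f"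
  shows "sum g A \<in> range f"
  using assms(2)
proof (induction A rule: infinite_finite_induct)
  case (infinite A)
  have "0 = f 0" using hom_basic(1)[OF assms(1)] by simp
  then show ?case using infinite by (simp add: range_eqI)
next
  case empty
  have "0 = f 0" using hom_basic(1)[OF assms(1)] by simp
  then show ?case by (simp add: range_eqI)
next
  case (insert x F)
  have "g x \<in> range f" "sum g F \<in> range f" using insert by auto
  then obtain a b where "g x = f a" "sum g F = f b" by blast
  then have "sum g (insert x F) = f (a + b)" using insert hom_basic(3)[OF assms(1), of a b] by simp
  then show ?case by (simp add: range_eqI)
qed

lemma lagrange:
  fixes \<phi> :: "'l::ring_1 \<Rightarrow> 'm::ring_1"
  assumes hom: "grp_hom \<phi>" and fin: "finite (cokernel \<phi>)"
  shows "of_nat (card (cokernel \<phi>)) * y \<in> range \<phi>"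
proof -
  let ?H = "range \<phi>"
  let ?K = "cokernel \<phi>"
  define cs where "cs z = (\<lambda>v. z + v) ` ?H" for z
  have "0 = \<phi> 0" using hom_basic(1)[OF hom] by simp
  then have H0: "0 \<in> ?H" by (rule range_eqI)
  have Hneg: "- a \<in> ?H" if "a \<in> ?H" for a
  proof -
    obtain p where "a = \<phi> p" using \<open>a \<in> ?H\<close> by blast
    then have "- a = \<phi> (- p)" by (simp add: hom_basic(2)[OF hom])
    then show ?thesis by simp
  qed
  have mem_cs: "a \<in> cs z \<longleftrightarrow> a - z \<in> ?H" for a z
  proof
    assume "a \<in> cs z" then show "a - z \<in> ?H" unfolding cs_def by auto
  next
    assume "a - z \<in> ?H"
    then have "a = z + (a - z)" "a - z \<in> ?H" by simp_all
    then show "a \<in> cs z" unfolding cs_def by blast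
  qed
  have K_def': "?K = {cs z | z. True}" unfolding cokernel_def cs_def by simp
  define rep where "rep C = (SOME z. C = cs z)" for C
  have rep: "C = cs (rep C)" if "C \<in> ?K" for C
  proof -
    have "C \<in> {cs z | z. True}" using that by (simp only: K_def')
    then obtain z where "C = cs z" by (auto simp del: ex_simps)
    then show ?thesis unfolding rep_def by (rule someI)
  qed
  have rep_in: "rep C \<in> C" if "C \<in> ?K" for C
  proof -
    have "rep C \<in> cs (rep C)" unfolding mem_cs using H0 by simp
    then show ?thesis using rep[OF that, symmetric] by simp
  qed
  define T where "T C = (\<lambda>v. y + v) ` C" for C
  have T_cs: "T (cs z) = cs (y + z)" for z
    unfolding T_def cs_def image_image by (simp add: add.assoc)
  have T_K: "T C \<in> ?K" if "C \<in> ?K" for C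
  proof -
    have "T C = cs (y + rep C)" using T_cs[of "rep C"] rep[OF that, symmetric] by simp
    then have "T C \<in> {cs z | z. True}" by (intro CollectI exI[of _ "y + rep C"]) simp
    then show ?thesis by (simp only: K_def')
  qed
  define T' where "T' C = (\<lambda>v. - y + v) ` C" for C
  have T'_K: "T' C \<in> ?K" if "C \<in> ?K" for C
  proof -
    have "T' (cs z) = cs (- y + z)" for z
      unfolding T'_def cs_def image_image by (simp add: algebra_simps)
    from this[of "rep C"] have "T' C = cs (- y + rep C)" using rep[OF that, symmetric] by simp
    then have "T' C \<in> {cs z | z. True}" by (intro CollectI exI[of _ "- y + rep C"]) simp
    then show ?thesis by (simp only: K_def')
  qed
  have TT': "T' (T C) = C" for C unfolding T_def T'_def image_image by simp
  have T'T: "T (T' C) = C" for C unfolding T_def T'_def image_image by simp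
  have bij: "bij_betw T ?K ?K"
    by (rule bij_betw_byWitness[where f'=T']) (auto simp: TT' T'T T_K T'_K)
  have trm: "y + rep C - rep (T C) \<in> ?H" if C: "C \<in> ?K" for C
  proof -
    have mem: "rep (T C) \<in> T C" using rep_in[OF T_K[OF C]] .
    have eqT: "T C = cs (y + rep C)" using T_cs[of "rep C"] rep[OF C, symmetric] by simp
    have "rep (T C) \<in> cs (y + rep C)" unfolding eqT[symmetric] by (rule mem)
    then have "rep (T C) - (y + rep C) \<in> ?H" by (simp only: mem_cs)
    from Hneg[OF this] show ?thesis by (simp add: algebra_simps)
  qed
  have "(\<Sum>C\<in>?K. y + rep C - rep (T C)) \<in> ?H" by (rule sum_in_range[OF hom]) (rule trm)
  moreover have "(\<Sum>C\<in>?K. y + rep C - rep (T C)) = of_nat (card ?K) * y"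
  proof -
    have "(\<Sum>C\<in>?K. rep (T C)) = (\<Sum>C\<in>?K. rep C)" by (rule sum.reindex_bij_betw[OF bij])
    then show ?thesis by (simp add: sum_subtractf sum.distrib)
  qed
  ultimately show ?thesis by simp
qed




lemma SI_sum:
  assumes "0 \<in> SI" "\<And>x y. x \<in> SI \<Longrightarrow> y \<in> SI \<Longrightarrow> x + y \<in> SI" "\<And>a. a \<in> A \<Longrightarrow> g a \<in> SI"
  shows "sum g A \<in> SI"
  using assms(3) by (induction A rule: infinite_finite_induct) (auto intro: assms(1,2))

theorem mainTheorem10:
  fixes \<phi> :: "int ^ 'n::finite \<Rightarrow> int ^ 'm::finite"
  assumes "isogeny \<phi>"
    and "\<exists>u::'a::comm_ring_1. of_nat (iso_degree \<phi>) * u = 1"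
  shows "bij_betw (completion_map \<phi>)
           (completion :: (nat \<Rightarrow> (int ^ 'n \<Rightarrow>\<^sub>0 'a) set) set)
           (completion :: (nat \<Rightarrow> (int ^ 'm \<Rightarrow>\<^sub>0 'a) set) set)"
proof -
  have hom: "grp_hom \<phi>" and inj: "inj \<phi>" and fin: "finite (cokernel \<phi>)"
    using assms(1) by (auto simp: isogeny_def)
  define d where "d = iso_degree \<phi>"
  obtain u :: 'a where u: "of_nat d * u = 1" using assms(2) d_def by blast
  have dy: "of_nat d * y \<in> range \<phi>" for y
    using lagrange[OF hom fin] by (simp add: d_def iso_degree_def)
  define \<psi> where "\<psi> y = inv \<phi> (of_nat d * y)" for y
  have \<phi>\<psi>: "\<phi> (\<psi> y) = of_nat d * y" for y
    unfolding \<psi>_def by (rule f_inv_into_f[OF dy])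
  have \<psi>hom: "grp_hom \<psi>"
    unfolding grp_hom_def
  proof (intro allI)
    fix a b
    have "\<phi> (\<psi> a + \<psi> b) = \<phi> (\<psi> (a + b))"
      by (simp add: hom_basic(3)[OF hom] \<phi>\<psi> distrib_left)
    then show "\<psi> (a + b) = \<psi> a + \<psi> b" using inj by (simp add: inj_eq)
  qed
  have \<psi>\<phi>: "\<psi> (\<phi> x) = of_nat d * x" for x
  proof -
    have "\<phi> (\<psi> (\<phi> x)) = \<phi> (of_nat d * x)" by (simp add: \<phi>\<psi> hom_nat[OF hom])
    then show ?thesis using inj by (simp add: inj_eq)
  qed
  let ?F = "group_ring_map \<phi> :: (int ^ 'n \<Rightarrow>\<^sub>0 'a) \<Rightarrow> (int ^ 'm \<Rightarrow>\<^sub>0 'a)"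
  let ?G = "group_ring_map \<psi> :: (int ^ 'm \<Rightarrow>\<^sub>0 'a) \<Rightarrow> (int ^ 'n \<Rightarrow>\<^sub>0 'a)"
  let ?J = "aug_ideal :: (int ^ 'n \<Rightarrow>\<^sub>0 'a) set"
  let ?J' = "aug_ideal :: (int ^ 'm \<Rightarrow>\<^sub>0 'a) set"
  have Jid: "is_ideal ?J" and J'id: "is_ideal ?J'" by (rule aug_ideal_ideal)+
  have Fmult: "?F (x * y) = ?F x * ?F y" for x y
    by (rule grm_mult) (simp add: hom_basic(3)[OF hom])
  have Gmult: "?G (x * y) = ?G x * ?G y" for x y
    by (rule grm_mult) (simp add: hom_basic(3)[OF \<psi>hom])
  have a: "?F x \<in> ideal_pow ?J' k" if "x \<in> ideal_pow ?J k" for x k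
    by (rule ideal_pow_hom[OF grm_add Fmult grm_zero _ that]) (simp add: J_mem aug_grm)
  have aG: "?G x \<in> ideal_pow ?J k" if "x \<in> ideal_pow ?J' k" for x k
    by (rule ideal_pow_hom[OF grm_add Gmult grm_zero _ that]) (simp add: J_mem aug_grm)
  define E :: "int ^ 'n \<Rightarrow>\<^sub>0 'a" where "E = Poly_Mapping.single 0 u"
  have E: "of_nat d * E = 1"
    unfolding E_def by (simp flip: single_of_nat add: mult_single u)
  have c: "x \<in> ideal_pow ?J k" if "?F x \<in> ideal_pow ?J' k" for x k
  proof -
    have "?G (?F x) \<in> ideal_pow ?J k" by (rule aG[OF that])
    moreover have "?G (?F x) = group_ring_map (\<lambda>l. of_nat d * l) x"
      by (simp add: grm_comp o_def \<psi>\<phi>)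
    ultimately show ?thesis using lemC[OF _ E] by simp
  qed
  have b: "\<exists>x. y - ?F x \<in> ideal_pow ?J' k" for y k
  proof -
    let ?S = "range ?F"
    let ?I = "ideal_pow ?J' k"
    have Iid: "is_ideal ?I" by (rule ideal_pow_ideal[OF J'id])
    define SI where "SI = {s + i | s i. s \<in> ?S \<and> i \<in> ?I}"
    have S1: "1 \<in> ?S" using grm_one[of \<phi>, OF hom_basic(1)[OF hom]] by (metis rangeI)
    have Sadd: "x + y \<in> ?S" if "x \<in> ?S" "y \<in> ?S" for x y
      using that by (auto simp flip: grm_add)
    have Smul: "x * y \<in> ?S" if "x \<in> ?S" "y \<in> ?S" for x y
      using that by (auto simp flip: Fmult)
    have Sneg: "- x \<in> ?S" if "x \<in> ?S" for x
      using that by (auto simp flip: grm_uminus)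
    have Ssc: "Poly_Mapping.single 0 c \<in> ?S" for c
    proof -
      have "?F (Poly_Mapping.single 0 c) = Poly_Mapping.single 0 c" by (simp add: hom_basic(1)[OF hom])
      then show ?thesis by (metis rangeI)
    qed
    have e: "Poly_Mapping.single 0 u \<in> ?S" "Poly_Mapping.single 0 u * of_nat d = (1 :: int ^ 'm \<Rightarrow>\<^sub>0 'a)"
      using Ssc u by (auto simp flip: single_of_nat simp add: mult_single mult.commute[of u])
    have v_SI: "Poly_Mapping.single l 1 - 1 \<in> SI" for l
    proof -
      define v :: "int ^ 'm \<Rightarrow>\<^sub>0 'a" where "v = Poly_Mapping.single l 1 - 1"
      have "(1 + v) ^ d - 1 = Poly_Mapping.single (of_nat d * l) 1 - 1"
        unfolding v_def by (simp add: single_pow)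
      also have "\<dots> = ?F (Poly_Mapping.single (\<psi> l) 1 - 1)"
        by (simp add: grm_diff grm_one hom_basic(1)[OF hom] \<phi>\<psi>)
      finally have t: "(1 + v) ^ d - 1 \<in> ?S" by (metis rangeI)
      have "v \<in> ?J'" unfolding v_def J_mem by (simp add: aug_diff)
      then have vk: "v ^ k \<in> ?I" by (rule ideal_power_mem[OF J'id])
      show ?thesis using surj_core[OF S1 Sadd Smul Sneg Iid e t vk] unfolding SI_def v_def .
    qed
    have SI0: "0 \<in> SI" unfolding SI_def using is_idealD(1)[OF Iid] Sneg[OF S1] Sadd[OF S1 Sneg[OF S1]]
      by (intro CollectI exI[of _ 0]) simp
    have SIadd: "x + y \<in> SI" if xy: "x \<in> SI" "y \<in> SI" for x y
    proof -
      obtain s1 i1 s2 i2 where "x = s1 + i1" "y = s2 + i2" "s1 \<in> ?S" "s2 \<in> ?S" "i1 \<in> ?I" "i2 \<in> ?I"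
        using xy unfolding SI_def by fastforce
      then have "x + y = (s1 + s2) + (i1 + i2)" "s1 + s2 \<in> ?S" "i1 + i2 \<in> ?I"
        by (auto simp: Sadd is_idealD(2)[OF Iid] algebra_simps)
      then show ?thesis unfolding SI_def by blast
    qed
    have SIsmul: "s * x \<in> SI" if sx: "s \<in> ?S" "x \<in> SI" for s x
    proof -
      obtain s1 i1 where "x = s1 + i1" "s1 \<in> ?S" "i1 \<in> ?I"
        using sx unfolding SI_def by blast
      then have "s * x = s * s1 + s * i1" "s * s1 \<in> ?S" "s * i1 \<in> ?I"
        using sx(1) by (auto simp: Smul is_idealD(3)[OF Iid] distrib_left)
      then show ?thesis unfolding SI_def by blast
    qed
    have SIS: "s \<in> SI" if "s \<in> ?S" for s
      unfolding SI_def using that is_idealD(1)[OF Iid] by (intro CollectI exI[of _ s] exI[of _ 0]) simp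
    have term1: "Poly_Mapping.single l (Poly_Mapping.lookup y l) \<in> SI" for l
    proof -
      let ?c = "Poly_Mapping.single 0 (Poly_Mapping.lookup y l) :: int ^ 'm \<Rightarrow>\<^sub>0 'a"
      have "Poly_Mapping.single l (Poly_Mapping.lookup y l) = ?c + ?c * (Poly_Mapping.single l 1 - 1)"
        by (simp add: mult_single algebra_simps)
      then show ?thesis using SIadd[OF SIS[OF Ssc] SIsmul[OF Ssc v_SI]] by simp
    qed
    have "y \<in> SI"
      by (subst pm_decomp) (rule SI_sum[OF SI0 SIadd term1])
    then obtain s i where "y = s + i" "s \<in> ?S" "i \<in> ?I" unfolding SI_def by blast
    then obtain x where "y = ?F x + i" "i \<in> ?I" by blast
    then show ?thesis by (intro exI[of _ x]) simp
  qed
  have gl: "bij_betw (\<lambda>X k. \<Union>r\<in>X k. coset_of (ideal_pow ?J' k) (?F r))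
           {X. \<forall>k. (\<exists>r. X k = coset_of (ideal_pow ?J k) r) \<and> X (Suc k) \<subseteq> X k}
           {Y. \<forall>k. (\<exists>r. Y k = coset_of (ideal_pow ?J' k) r) \<and> Y (Suc k) \<subseteq> Y k}"
  proof (rule glue)
    show "0 \<in> ideal_pow ?J k" for k by (rule is_idealD(1)[OF ideal_pow_ideal[OF Jid]])
    show "x - y \<in> ideal_pow ?J k" if "x \<in> ideal_pow ?J k" "y \<in> ideal_pow ?J k" for k x y
      by (rule is_idealD(6)[OF ideal_pow_ideal[OF Jid] that])
    show "0 \<in> ideal_pow ?J' k" for k by (rule is_idealD(1)[OF ideal_pow_ideal[OF J'id]])
    show "x - y \<in> ideal_pow ?J' k" if "x \<in> ideal_pow ?J' k" "y \<in> ideal_pow ?J' k" for k x y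
      by (rule is_idealD(6)[OF ideal_pow_ideal[OF J'id] that])
    show "ideal_pow ?J (Suc k) \<subseteq> ideal_pow ?J k" for k by (rule ideal_pow_Suc_sub[OF Jid])
    show "ideal_pow ?J' (Suc k) \<subseteq> ideal_pow ?J' k" for k by (rule ideal_pow_Suc_sub[OF J'id])
    show "?F (x - y) = ?F x - ?F y" for x y by (rule grm_diff)
    show "?F x \<in> ideal_pow ?J' k" if "x \<in> ideal_pow ?J k" for k x using a[OF that] .
    show "\<exists>x. y - ?F x \<in> ideal_pow ?J' k" for k y by (rule b)
    show "x \<in> ideal_pow ?J k" if "?F x \<in> ideal_pow ?J' k" for k x using c[OF that] .
  qed
  then show ?thesis unfolding completion_def completion_map_def .
qed


end
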